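(* Let $b,c\in\mathbb{Z}$ and $d=b^2-4c$. For every positive integer $n$, $$nT_n(b,c)T_{n-1}(b,c)=b\sum_{j=0}^{n-1}(n-j)\binom{n+j}{2j}\binom{2j}{j}^2c^jd^{n-1-j}.$$
   Context: $T_n(b,c)$ is the coefficient of $x^n$ in $(x^2+bx+c)^n$, i.e. $T_n(b,c)=\sum_{k=0}^{\lfloor n/2\rfloor}\binom{n}{2k}\binom{2k}{k}b^{n-2k}c^k$. *)

theory Defs
  imports Main
begin

text \<open>Central trinomial coefficient T_n(b,c): coefficient of x^n in (x^2+bx+c)^n,
  given explicitly by the sum below.\<close>
definition T :: "nat \<Rightarrow> int \<Rightarrow> int \<Rightarrow> int" where
  "T n b c = (\<Sum>k\<le>n div 2. int (n choose (2*k)) * int ((2*k) choose k) * b^(n - 2*k) * c^k)"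

end

theory Submission
  imports Defs Complex_Main
begin

definition ff :: "real \<Rightarrow> nat \<Rightarrow> real" where
  "ff y r = (\<Prod>i=0..<r. y - of_nat i)"

lemma ff_Suc: "ff y (Suc r) = ff y r * (y - of_nat r)"
  by (simp add: ff_def)

lemma ff_Suc': "ff (y + 1) (Suc r) = (y + 1) * ff y r"
  unfolding ff_def prod.atLeast0_lessThan_Suc_shift by (simp add: algebra_simps)

lemma choose_ff: "fact k * real (n choose k) = ff (real n) k"
  unfolding ff_def by (subst binomial_gbinomial) (rule gbinomial_mult_fact)

definition tt :: "nat \<Rightarrow> nat \<Rightarrow> int" where
  "tt n k = int (n choose (2*k)) * int ((2*k) choose k)"

definition aa :: "nat \<Rightarrow> nat \<Rightarrow> int" where
  "aa n j = int ((n + j) choose (2*j)) * int ((2*j) choose j)^2"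

lemma central_fact: "real ((2*k) choose k) * fact k * fact k = fact (2*k)"
proof -
  have "fact k * fact (2*k - k) * ((2*k) choose k) = (fact (2*k) :: nat)"
    by (rule binomial_fact_lemma) simp
  hence "real (fact k * fact k * ((2*k) choose k)) = real (fact (2*k))" by simp
  thus ?thesis by (simp add: algebra_simps)
qed

lemma tt_real: "real_of_int (tt n k) * (fact k)^2 = ff (real n) (2*k)"
proof -
  have "real_of_int (tt n k) * (fact k)^2 = real (n choose (2*k)) * (real ((2*k) choose k) * fact k * fact k)"
    by (simp add: tt_def power2_eq_square algebra_simps)
  also have "\<dots> = ff (real n) (2*k)"
    using central_fact[of k] choose_ff[of "2*k" n] by (simp add: algebra_simps)
  finally show ?thesis .
qed

lemma aa_real: "real_of_int (aa n j) * (fact j)^4 = ff (real n + real j) (2*j) * fact (2*j)"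
proof -
  have "real_of_int (aa n j) * (fact j)^4 = real ((n+j) choose (2*j)) * (real ((2*j) choose j) * fact j * fact j)^2"
    by (simp add: aa_def power2_eq_square numeral_eq_Suc algebra_simps)
  also have "\<dots> = (fact (2*j) * real ((n+j) choose (2*j))) * fact (2*j)"
    using central_fact[of j] by (simp add: power2_eq_square)
  also have "\<dots> = ff (real n + real j) (2*j) * fact (2*j)"
    using choose_ff[of "2*j" "n+j"] by simp
  finally show ?thesis .
qed

lemma ff2: "ff y (Suc (Suc r)) = ff y r * (y - of_nat r) * (y - of_nat r - 1)"
  by (simp add: ff_Suc algebra_simps)

lemma C1: "int (m+2) * tt (m+2) k = int (2*m+3) * tt (m+1) k - int (m+1) * tt m k
   + 4 * int (m+1) * (if k = 0 then 0 else tt m (k-1))"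
proof (cases k)
  case 0
  then show ?thesis by (simp add: tt_def)
next
  case (Suc i)
  define x where "x = real m"
  define v where "v = ff x (2*i)"
  define F where "F = (fact i :: real)^2"
  have Fpos: "F > 0" unfolding F_def by simp
  have fs: "(fact (Suc i) :: real)^2 = (real i + 1)^2 * F"
    unfolding F_def by (simp add: power2_eq_square algebra_simps)
  have ha: "real_of_int (tt m i) = v / F"
    using tt_real[of m i] Fpos unfolding v_def F_def x_def by (simp add: field_simps)
  have "real_of_int (tt m (Suc i)) * (fact (Suc i))^2 = ff x (Suc (Suc (2*i)))"
    using tt_real[of m "Suc i"] unfolding x_def by simp
  also have "\<dots> = v * (x - 2*i) * (x - 2*i - 1)" unfolding v_def ff2 by simp
  finally have hb: "real_of_int (tt m (Suc i)) = v * (x - 2*i) * (x - 2*i - 1) / ((real i + 1)^2 * F)"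
    using Fpos fs by (simp add: field_simps)
  have "real_of_int (tt (m+1) (Suc i)) * (fact (Suc i))^2 = ff (x+1) (Suc (2*i+1))"
    using tt_real[of "m+1" "Suc i"] unfolding x_def by (simp add: algebra_simps)
  also have "\<dots> = (x+1) * (v * (x - 2*i))" unfolding ff_Suc' by (simp add: v_def ff_Suc)
  finally have hc: "real_of_int (tt (m+1) (Suc i)) = (x+1) * (v * (x - 2*i)) / ((real i + 1)^2 * F)"
    using Fpos fs by (simp add: field_simps)
  have e2: "real (m+2) = (x+1)+1" unfolding x_def by simp
  have "real_of_int (tt (m+2) (Suc i)) * (fact (Suc i))^2 = ff ((x+1)+1) (Suc (Suc (2*i)))"
    using tt_real[of "m+2" "Suc i"] unfolding e2 by (simp add: algebra_simps)
  also have "\<dots> = (x+2) * ((x+1) * v)" unfolding ff_Suc' v_def by (simp add: algebra_simps)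
  finally have hd: "real_of_int (tt (m+2) (Suc i)) = (x+2) * ((x+1) * v) / ((real i + 1)^2 * F)"
    using Fpos fs by (simp add: field_simps)
  have key: "(x+2) * real_of_int (tt (m+2) (Suc i)) = (2*x+3) * real_of_int (tt (m+1) (Suc i))
     - (x+1) * real_of_int (tt m (Suc i)) + 4*(x+1) * real_of_int (tt m i)"
    unfolding ha hb hc hd using Fpos by (simp add: field_simps) algebra
  have "real_of_int (int (m+2) * tt (m+2) k) = real_of_int (int (2*m+3) * tt (m+1) k - int (m+1) * tt m k
   + 4 * int (m+1) * (if k = 0 then 0 else tt m (k-1)))"
    using key unfolding Suc x_def by (simp add: algebra_simps)
  then show ?thesis by (simp only: of_int_eq_iff)
qed

lemma C2: "int (N+1-j) * aa (N+1) j = int (N+1+j) * aa N j"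
proof -
  have "(N+1+j - 2*j) * ((N+1+j) choose (2*j)) = (N+1+j) * ((N+1+j - 1) choose (2*j))"
    by (rule binomial_absorb_comp)
  moreover have "N+1+j - 2*j = N+1-j" by arith
  ultimately have "(N+1-j) * ((N+1+j) choose (2*j)) = (N+1+j) * ((N+j) choose (2*j))" by simp
  hence "int (N+1-j) * int ((N+1+j) choose (2*j)) = int (N+1+j) * int ((N+j) choose (2*j))"
    by (metis of_nat_mult)
  thus ?thesis unfolding aa_def
    by (metis (no_types, lifting) add.assoc add.commute mult.assoc)
qed

lemma aa_zero: "N < j \<Longrightarrow> aa N j = 0"
  by (simp add: aa_def)

lemma tt_zero: "N < 2*k \<Longrightarrow> tt N k = 0"
  by (simp add: tt_def)

lemma C3:
  assumes "j \<le> m+2"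
  shows "int (m+2)^2 * aa (m+2) j = int (2*m+3)^2 * (aa (m+1) j + 4 * (if j=0 then 0 else aa (m+1) (j-1)))
 - 2 * int (2*m+3) * (int (m+1-j) * aa (m+1) j + 4 * (if j=0 then 0 else int (m+1-(j-1)) * aa (m+1) (j-1)))
 + int (m+1)^2 * aa m j"
proof (cases j)
  case 0
  then show ?thesis by (simp add: aa_def power2_eq_square algebra_simps)
next
  case (Suc i)
  have im: "i \<le> m+1" using assms Suc by simp
  define x where "x = real m + 1"
  define v where "v = ff (x + real i) (2*i)"
  define G where "G = (fact (2*i) :: real)"
  define F where "F = (fact i :: real)^4"
  have Fpos: "F > 0" unfolding F_def by simp
  have Gpos: "G > 0" unfolding G_def by simp
  have f4: "(fact (Suc i) :: real)^4 = (real i + 1)^4 * F"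
  proof -
    have "(fact (Suc i) :: real) = (real i + 1) * fact i" by simp
    thus ?thesis unfolding F_def by (simp only: power_mult_distrib)
  qed
  define K where "K = (2*real i+2)*(2*real i+1)*G"
  have fK: "(fact (Suc (Suc (2*i))) :: real) = K"
    unfolding G_def K_def by (simp add: algebra_simps)
  define D where "D = (real i + 1)^4 * F"
  have Dpos: "D > 0" unfolding D_def using Fpos by simp
  have ha: "real_of_int (aa (m+1) i) = v * G / F"
    using aa_real[of "m+1" i] Fpos unfolding v_def G_def F_def x_def by (simp add: field_simps)
  have s2: "2 * Suc i = Suc (Suc (2*i))" by simp
  have e1: "real (m+1) + real (Suc i) = (x + real i) + 1" unfolding x_def by simp
  have "real_of_int (aa (m+1) (Suc i)) * (fact (Suc i))^4 = ff (real (m+1) + real (Suc i)) (2 * Suc i) * fact (2 * Suc i)"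
    by (rule aa_real)
  also have "\<dots> = ff ((x + real i) + 1) (Suc (Suc (2*i))) * K"
    unfolding e1 s2 fK ..
  also have "\<dots> = (x + real i + 1) * (v * (x - real i)) * K"
    unfolding ff_Suc' by (simp add: v_def ff_Suc)
  finally have hb0: "real_of_int (aa (m+1) (Suc i)) * D = (x + real i + 1) * (v * (x - real i)) * K" unfolding D_def f4[symmetric] .
  have hb: "real_of_int (aa (m+1) (Suc i)) = (x + real i + 1) * (v * (x - real i)) * K / D"
    using Dpos hb0 by (simp add: field_simps)
  have e2: "real (m+2) + real (Suc i) = ((x + real i) + 1) + 1" unfolding x_def by simp
  have "real_of_int (aa (m+2) (Suc i)) * (fact (Suc i))^4 = ff (real (m+2) + real (Suc i)) (2 * Suc i) * fact (2 * Suc i)"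
    by (rule aa_real)
  also have "\<dots> = ff (((x + real i) + 1) + 1) (Suc (Suc (2*i))) * K"
    unfolding e2 s2 fK ..
  also have "\<dots> = (x + real i + 2) * ((x + real i + 1) * v) * K"
    unfolding ff_Suc' v_def by (simp add: algebra_simps)
  finally have hc0: "real_of_int (aa (m+2) (Suc i)) * D = (x + real i + 2) * ((x + real i + 1) * v) * K" unfolding D_def f4[symmetric] .
  have hc: "real_of_int (aa (m+2) (Suc i)) = (x + real i + 2) * ((x + real i + 1) * v) * K / D"
    using Dpos hc0 by (simp add: field_simps)
  have e3: "real m + real (Suc i) = x + real i" unfolding x_def by simp
  have "real_of_int (aa m (Suc i)) * (fact (Suc i))^4 = ff (real m + real (Suc i)) (2 * Suc i) * fact (2 * Suc i)"
    by (rule aa_real)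
  also have "\<dots> = ff (x + real i) (Suc (Suc (2*i))) * K"
    unfolding e3 s2 fK ..
  also have "\<dots> = v * (x - real i) * (x - real i - 1) * K"
    unfolding ff2 v_def by (simp add: algebra_simps)
  finally have hd0: "real_of_int (aa m (Suc i)) * D = v * (x - real i) * (x - real i - 1) * K" unfolding D_def f4[symmetric] .
  have hd: "real_of_int (aa m (Suc i)) = v * (x - real i) * (x - real i - 1) * K / D"
    using Dpos hd0 by (simp add: field_simps)
  have n1: "int (m+1-Suc i) * aa (m+1) (Suc i) = (int m - int i) * aa (m+1) (Suc i)"
  proof (cases "i \<le> m")
    case True thus ?thesis by (simp add: of_nat_diff)
  next
    case False thus ?thesis using aa_zero[of "m+1" "Suc i"] by simp
  qed
  have n2: "int (m+1-(Suc i - 1)) = int m + 1 - int i" using im by (simp add: of_nat_diff)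
  have key: "(x+1)^2 * real_of_int (aa (m+2) (Suc i)) = (2*x+1)^2 * (real_of_int (aa (m+1) (Suc i)) + 4 * real_of_int (aa (m+1) i))
     - 2*(2*x+1) * ((x - real i - 1) * real_of_int (aa (m+1) (Suc i)) + 4 * (x - real i) * real_of_int (aa (m+1) i))
     + x^2 * real_of_int (aa m (Suc i))"
    unfolding ha hb hc hd K_def D_def using Fpos Gpos by (simp add: field_simps) algebra
  have "real_of_int (int (m+2)^2 * aa (m+2) j) = real_of_int (int (2*m+3)^2 * (aa (m+1) j + 4 * (if j=0 then 0 else aa (m+1) (j-1)))
 - 2 * int (2*m+3) * (int (m+1-j) * aa (m+1) j + 4 * (if j=0 then 0 else int (m+1-(j-1)) * aa (m+1) (j-1)))
 + int (m+1)^2 * aa m j)"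
    unfolding Suc n1 n2 using key unfolding x_def by (simp add: algebra_simps)
  then show ?thesis by (simp only: of_int_eq_iff)
qed



definition H :: "int \<Rightarrow> int \<Rightarrow> nat \<Rightarrow> (nat \<Rightarrow> int) \<Rightarrow> int" where
  "H c d N f = (\<Sum>j\<le>N. f j * c^j * d^(N-j))"

definition EE :: "int \<Rightarrow> int \<Rightarrow> nat \<Rightarrow> (nat \<Rightarrow> int) \<Rightarrow> int" where
  "EE b c N f = (\<Sum>k\<le>N. f k * b^(N-2*k) * c^k)"

definition sh :: "(nat \<Rightarrow> int) \<Rightarrow> nat \<Rightarrow> int" where
  "sh f j = (if j = 0 then 0 else f (j-1))"

lemma H_d: "f (Suc N) = 0 \<Longrightarrow> d * H c d N f = H c d (Suc N) f"
  unfolding H_def by (auto simp add: sum_distrib_left Suc_diff_le algebra_simps intro!: sum.cong)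

lemma H_c: "c * H c d N f = H c d (Suc N) (sh f)"
  unfolding H_def sum.atMost_Suc_shift by (simp add: sh_def sum_distrib_left algebra_simps)

lemma H_smult: "p * H c d N f = H c d N (\<lambda>j. p * f j)"
  unfolding H_def by (simp add: sum_distrib_left algebra_simps)

lemma H_add: "H c d N f + H c d N g = H c d N (\<lambda>j. f j + g j)"
  unfolding H_def by (simp add: sum.distrib algebra_simps)

lemma H_sub: "H c d N f - H c d N g = H c d N (\<lambda>j. f j - g j)"
  unfolding H_def by (simp add: sum_subtractf algebra_simps)

lemma H_cong: "(\<And>j. j \<le> N \<Longrightarrow> f j = g j) \<Longrightarrow> H c d N f = H c d N g"
  unfolding H_def by (intro sum.cong) auto

lemma EE_b:
  assumes "\<And>k. N < 2*k \<Longrightarrow> f k = 0" "f (Suc N) = 0"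
  shows "b * EE b c N f = EE b c (Suc N) f"
proof -
  have "b * EE b c N f = (\<Sum>k\<le>N. f k * b^(Suc N-2*k) * c^k)"
    unfolding EE_def sum_distrib_left
  proof (intro sum.cong refl)
    fix k assume "k \<in> {..N}"
    show "b * (f k * b ^ (N - 2 * k) * c ^ k) = f k * b ^ (Suc N - 2 * k) * c ^ k"
    proof (cases "2*k \<le> N")
      case True thus ?thesis by (simp add: Suc_diff_le)
    next
      case False thus ?thesis using assms(1)[of k] by simp
    qed
  qed
  also have "\<dots> = EE b c (Suc N) f" unfolding EE_def using assms(2) by simp
  finally show ?thesis .
qed

lemma EE_c:
  assumes "f (Suc N) = 0"
  shows "c * EE b c N f = EE b c (Suc (Suc N)) (sh f)"
proof -
  have "EE b c (Suc (Suc N)) (sh f) = (\<Sum>k\<le>Suc N. f k * b^(N-2*k) * c^(Suc k))"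
    unfolding EE_def sum.atMost_Suc_shift by (simp add: sh_def)
  also have "\<dots> = (\<Sum>k\<le>N. f k * b^(N-2*k) * c^(Suc k))" using assms by simp
  also have "\<dots> = c * EE b c N f" unfolding EE_def sum_distrib_left by (simp add: algebra_simps)
  finally show ?thesis by simp
qed

lemma T_EE: "T n b c = EE b c n (tt n)"
  unfolding T_def EE_def
proof (rule sum.mono_neutral_cong_left)
  show "finite {..n}" by simp
  show "{..n div 2} \<subseteq> {..n}" by auto
  show "\<forall>i\<in>{..n} - {..n div 2}. tt n i * b ^ (n - 2 * i) * c ^ i = 0"
    using tt_zero[of n] by auto
  show "\<And>x. x \<in> {..n div 2} \<Longrightarrow> int (n choose (2 * x)) * int (2 * x choose x) * b ^ (n - 2 * x) * c ^ x =
         tt n x * b ^ (n - 2 * x) * c ^ x" by (simp add: tt_def)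
qed

lemma rec1: "int (n+2) * T (n+2) b c = int (2*n+3) * b * T (n+1) b c - int (n+1) * (b^2 - 4*c) * T n b c"
proof -
  have 1: "b * EE b c (n+1) (tt (n+1)) = EE b c (n+2) (tt (n+1))"
    using EE_b[of "n+1" "tt (n+1)" b c] tt_zero[of "n+1"] by simp
  have 2: "b * EE b c n (tt n) = EE b c (n+1) (tt n)"
    using EE_b[of "n" "tt n" b c] tt_zero[of "n"] by simp
  have 3: "b * EE b c (n+1) (tt n) = EE b c (n+2) (tt n)"
    using EE_b[of "n+1" "tt n" b c] tt_zero[of "n"] by simp
  have 4: "c * EE b c n (tt n) = EE b c (n+2) (sh (tt n))"
    using EE_c[of "tt n" n c b] tt_zero[of "n"] by simp
  have "int (2*n+3) * b * T (n+1) b c - int (n+1) * (b^2 - 4*c) * T n b c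
     = int (2*n+3) * (b * EE b c (n+1) (tt (n+1))) - int (n+1) * (b * (b * EE b c n (tt n)))
       + 4 * int (n+1) * (c * EE b c n (tt n))"
    unfolding T_EE by (simp add: power2_eq_square algebra_simps)
  also have "\<dots> = int (2*n+3) * EE b c (n+2) (tt (n+1)) - int (n+1) * EE b c (n+2) (tt n)
       + 4 * int (n+1) * EE b c (n+2) (sh (tt n))"
    unfolding 1 2 3 4 ..
  also have "\<dots> = EE b c (n+2) (\<lambda>k. int (2*n+3) * tt (n+1) k - int (n+1) * tt n k + 4 * int (n+1) * sh (tt n) k)"
    unfolding EE_def by (simp add: sum_distrib_left sum.distrib sum_subtractf algebra_simps)
  also have "\<dots> = EE b c (n+2) (\<lambda>k. int (n+2) * tt (n+2) k)"
    unfolding EE_def using C1[of n] by (simp add: sh_def)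
  also have "\<dots> = int (n+2) * T (n+2) b c"
    unfolding T_EE EE_def by (simp add: sum_distrib_left algebra_simps)
  finally show ?thesis ..
qed

lemma rec2: "H c d (n+1) (\<lambda>j. int (n+2-j) * aa (n+2) j)
   = int (2*n+3) * H c d (n+1) (aa (n+1)) - d * H c d n (\<lambda>j. int (n+1-j) * aa (n+1) j)"
proof -
  have 1: "d * H c d n (\<lambda>j. int (n+1-j) * aa (n+1) j) = H c d (n+1) (\<lambda>j. int (n+1-j) * aa (n+1) j)"
    using H_d[of "\<lambda>j. int (n+1-j) * aa (n+1) j" n d c] by simp
  have "int (2*n+3) * H c d (n+1) (aa (n+1)) - H c d (n+1) (\<lambda>j. int (n+1-j) * aa (n+1) j)
      = H c d (n+1) (\<lambda>j. int (2*n+3) * aa (n+1) j - int (n+1-j) * aa (n+1) j)"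
    by (simp only: H_smult H_sub)
  also have "\<dots> = H c d (n+1) (\<lambda>j. int (n+2-j) * aa (n+2) j)"
  proof (rule H_cong)
    fix j assume j: "j \<le> n+1"
    have "int (n+1+1-j) * aa (n+1+1) j = int (n+1+1+j) * aa (n+1) j" by (rule C2)
    thus "int (2*n+3) * aa (n+1) j - int (n+1-j) * aa (n+1) j = int (n+2-j) * aa (n+2) j"
      using j by (simp add: of_nat_diff algebra_simps)
  qed
  finally show ?thesis unfolding 1 by simp
qed

lemma rec3: "int (n+2)^2 * H c d (n+2) (aa (n+2)) = int (2*n+3)^2 * (d + 4*c) * H c d (n+1) (aa (n+1))
   - 2 * int (2*n+3) * (d + 4*c) * (d * H c d n (\<lambda>j. int (n+1-j) * aa (n+1) j))
   + int (n+1)^2 * d^2 * H c d n (aa n)"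
proof -
  define B where "B = (\<lambda>j. int (n+1-j) * aa (n+1) j)"
  have 1: "d * H c d (n+1) (aa (n+1)) = H c d (n+2) (aa (n+1))"
    using H_d[of "aa (n+1)" "n+1" d c] aa_zero[of "n+1" "n+2"] by simp
  have 2: "c * H c d (n+1) (aa (n+1)) = H c d (n+2) (sh (aa (n+1)))"
    using H_c[of c d "n+1" "aa (n+1)"] by simp
  have 3: "d * H c d n B = H c d (n+1) B"
    using H_d[of B n d c] unfolding B_def by simp
  have 4: "d * H c d (n+1) B = H c d (n+2) B"
    using H_d[of B "n+1" d c] unfolding B_def by simp
  have 5: "c * H c d (n+1) B = H c d (n+2) (sh B)"
    using H_c[of c d "n+1" B] by simp
  have 6: "d * H c d n (aa n) = H c d (n+1) (aa n)"
    using H_d[of "aa n" n d c] aa_zero[of n "n+1"] by simp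
  have 7: "d * H c d (n+1) (aa n) = H c d (n+2) (aa n)"
    using H_d[of "aa n" "n+1" d c] aa_zero[of n "n+2"] by simp
  have "int (2*n+3)^2 * (d + 4*c) * H c d (n+1) (aa (n+1))
   - 2 * int (2*n+3) * (d + 4*c) * (d * H c d n B)
   + int (n+1)^2 * d^2 * H c d n (aa n)
   = int (2*n+3)^2 * (d * H c d (n+1) (aa (n+1))) + 4 * int (2*n+3)^2 * (c * H c d (n+1) (aa (n+1)))
   - 2 * int (2*n+3) * (d * (d * H c d n B)) - 8 * int (2*n+3) * (c * (d * H c d n B))
   + int (n+1)^2 * (d * (d * H c d n (aa n)))"
    by (simp add: power2_eq_square algebra_simps)
  also have "\<dots> = int (2*n+3)^2 * H c d (n+2) (aa (n+1)) + 4 * int (2*n+3)^2 * H c d (n+2) (sh (aa (n+1)))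
   - 2 * int (2*n+3) * H c d (n+2) B - 8 * int (2*n+3) * H c d (n+2) (sh B)
   + int (n+1)^2 * H c d (n+2) (aa n)"
    unfolding 1 2 3 4 5 6 7 ..
  also have "\<dots> = H c d (n+2) (\<lambda>j. int (2*n+3)^2 * aa (n+1) j + 4 * int (2*n+3)^2 * sh (aa (n+1)) j
   - 2 * int (2*n+3) * B j - 8 * int (2*n+3) * sh B j + int (n+1)^2 * aa n j)"
    by (simp only: H_smult H_add H_sub)
  also have "\<dots> = H c d (n+2) (\<lambda>j. int (n+2)^2 * aa (n+2) j)"
  proof (rule H_cong)
    fix j assume j: "j \<le> n+2"
    show "int (2*n+3)^2 * aa (n+1) j + 4 * int (2*n+3)^2 * sh (aa (n+1)) j
   - 2 * int (2*n+3) * B j - 8 * int (2*n+3) * sh B j + int (n+1)^2 * aa n j = int (n+2)^2 * aa (n+2) j"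
      using C3[OF j] unfolding B_def sh_def by (simp add: algebra_simps)
  qed
  also have "\<dots> = int (n+2)^2 * H c d (n+2) (aa (n+2))"
    by (simp only: H_smult)
  finally show ?thesis unfolding B_def by simp
qed

lemma mainQ:
  "T n b c ^ 2 = H c (b^2-4*c) n (aa n) \<and> T (n+1) b c ^ 2 = H c (b^2-4*c) (n+1) (aa (n+1))
   \<and> int (n+1) * T (n+1) b c * T n b c = b * H c (b^2-4*c) n (\<lambda>j. int (n+1-j) * aa (n+1) j)"
proof (induction n)
  case 0
  have T0: "T 0 b c = 1" by (simp add: T_def)
  have T1: "T (Suc 0) b c = b" by (simp add: T_def)
  show ?case by (simp add: T0 T1 H_def aa_def power2_eq_square numeral_2_eq_2)
next
  case (Suc n)
  define d where "d = b^2 - 4*c"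
  have IH1: "T (n+1) b c ^ 2 = H c d (n+1) (aa (n+1))"
   and IH0: "T n b c ^ 2 = H c d n (aa n)"
   and IHx: "int (n+1) * T (n+1) b c * T n b c = b * H c d n (\<lambda>j. int (n+1-j) * aa (n+1) j)"
    using Suc.IH unfolding d_def by auto
  define X where "X = int (2*n+3) * b * T (n+1) b c - int (n+1) * d * T n b c"
  have r1: "int (n+2) * T (n+2) b c = X" unfolding X_def d_def by (rule rec1)
  have bb: "b^2 = d + 4*c" unfolding d_def by simp
  note r2 = rec2[of c d n]
  note r3 = rec3[of n c d]
  have A: "int (n+2) * T (n+2) b c * T (n+1) b c = b * H c d (n+1) (\<lambda>j. int (n+2-j) * aa (n+2) j)"
  proof -
    have "int (n+2) * T (n+2) b c * T (n+1) b c = int (2*n+3) * b * T (n+1) b c ^ 2 - d * (int (n+1) * T (n+1) b c * T n b c)"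
      unfolding r1 X_def by (simp add: power2_eq_square algebra_simps)
    also have "\<dots> = b * (int (2*n+3) * H c d (n+1) (aa (n+1)) - d * H c d n (\<lambda>j. int (n+1-j) * aa (n+1) j))"
      unfolding IH1 IHx by (simp add: algebra_simps)
    finally show ?thesis unfolding r2 .
  qed
  have B: "int (n+2)^2 * T (n+2) b c ^ 2 = int (n+2)^2 * H c d (n+2) (aa (n+2))"
  proof -
    have "int (n+2)^2 * T (n+2) b c ^ 2 = X^2" unfolding r1[symmetric] by (simp add: power_mult_distrib)
    also have "\<dots> = int (2*n+3)^2 * b^2 * T (n+1) b c ^ 2 - 2 * int (2*n+3) * b * d * (int (n+1) * T (n+1) b c * T n b c)
        + int (n+1)^2 * d^2 * T n b c ^ 2"
      unfolding X_def by (simp add: power2_eq_square algebra_simps)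
    also have "\<dots> = int (2*n+3)^2 * b^2 * H c d (n+1) (aa (n+1)) - 2 * int (2*n+3) * b^2 * (d * H c d n (\<lambda>j. int (n+1-j) * aa (n+1) j))
        + int (n+1)^2 * d^2 * H c d n (aa n)"
      unfolding IH1 IH0 IHx by (simp add: power2_eq_square algebra_simps)
    also have "\<dots> = int (n+2)^2 * H c d (n+2) (aa (n+2))"
      unfolding r3 bb by (simp add: algebra_simps)
    finally show ?thesis .
  qed
  have B': "T (n+2) b c ^ 2 = H c d (n+2) (aa (n+2))"
    using B by simp
  show ?case using A B' IH1 unfolding d_def by (simp add: add.commute)
qed


theorem lemma4p1:
  fixes b c :: int and n :: nat
  assumes "n \<ge> 1"
  shows "int n * T n b c * T (n - 1) b c =
    b * (\<Sum>j\<le>n - 1. int (n - j) * int ((n + j) choose (2*j)) * int ((2*j) choose j)^2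
         * c^j * (b^2 - 4*c)^(n - 1 - j))"
proof -
  obtain m where n: "n = Suc m" using assms by (cases n) auto
  have "int (m+1) * T (m+1) b c * T m b c = b * H c (b^2-4*c) m (\<lambda>j. int (m+1-j) * aa (m+1) j)"
    using mainQ[of m b c] by blast
  thus ?thesis unfolding n H_def aa_def by (simp add: mult.assoc)
qed

end
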